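(* Let $(X,d)$ be a metric space which is not a singleton, let $p\in[1,\infty)$ and let $(a_n)_{n\in\mathbb{N}^*}$ be a sequence of positive reals with $\sum_{n=0}^\infty a_n<\infty$. Let $\tau_T$ be the Tychonoff topology on $\ell_\infty(X)$ and $\tau_{d_{p,(a_n)}}$ the topology induced by the metric $d_{p,(a_n)}$. Then $\tau_T=\tau_{d_{p,(a_n)}}$ if and only if $(X,d)$ is bounded.
   Context: $\mathbb{N}^*=\{0,1,2,\dots\}$. For a metric space $(X,d)$, $\ell_\infty(X)$ denotes the set of all bounded sequences $(x_n)_{n\in\mathbb{N}^*}$ of elements of $X$. For a sequence $(a_n)$ of nonnegative reals, $p\in[1,\infty)$ and $x=(x_n),y=(y_n)\in\ell_\infty(X)$, $d_{p,(a_n)}(x,y):=\left(\sum_{n=0}^\infty a_n d^p(x_n,y_n)\right)^{1/p}$. The Tychonoff topology on $\ell_\infty(X)$ is the subspace topology induced from the product topology on $\prod_{n\in\mathbb{N}^*}X$, i.e. the topology of coordinatewise convergence. *)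

theory Defs
  imports "HOL-Analysis.Analysis"
begin

definition ell_infty :: "(nat \<Rightarrow> 'a::metric_space) set" where
  "ell_infty = {x. bounded (range x)}"

definition dpa :: "real \<Rightarrow> (nat \<Rightarrow> real) \<Rightarrow> (nat \<Rightarrow> 'a::metric_space) \<Rightarrow> (nat \<Rightarrow> 'a) \<Rightarrow> real" where
  "dpa p a x y = (\<Sum>n. a n * dist (x n) (y n) powr p) powr (1 / p)"

definition tychonoff_ell :: "(nat \<Rightarrow> 'a::metric_space) topology" where
  "tychonoff_ell = subtopology (product_topology (\<lambda>_. euclidean) UNIV) ell_infty"

definition dpa_topology :: "real \<Rightarrow> (nat \<Rightarrow> real) \<Rightarrow> (nat \<Rightarrow> 'a::metric_space) topology" where
  "dpa_topology p a = Metric_space.mtopology ell_infty (dpa p a)"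

end

theory Submission
  imports Defs
begin


definition Sp :: "real \<Rightarrow> (nat \<Rightarrow> real) \<Rightarrow> (nat \<Rightarrow> 'a::metric_space) \<Rightarrow> (nat \<Rightarrow> 'a) \<Rightarrow> real" where
  "Sp p a x y = (\<Sum>n. a n * dist (x n) (y n) powr p)"

lemma summable_Sp:
  assumes "x \<in> ell_infty" "y \<in> ell_infty" "summable a" "\<And>n. 0 \<le> a n" "0 \<le> p"
  shows "summable (\<lambda>n. a n * dist (x n) (y n) powr p)"
proof -
  obtain c :: 'a where True by blast
  obtain e1 where e1: "\<forall>z\<in>range x. dist c z \<le> e1" using assms(1) unfolding ell_infty_def bounded_any_center[of _ c] by auto
  obtain e2 where e2: "\<forall>z\<in>range y. dist c z \<le> e2" using assms(2) unfolding ell_infty_def bounded_any_center[of _ c] by auto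
  have b: "dist (x n) (y n) \<le> e1 + e2" for n
  proof -
    have "dist c (x n) \<le> e1" "dist c (y n) \<le> e2" using e1 e2 by auto
    then show ?thesis using dist_triangle[of "x n" "y n" c] dist_commute[of c "x n"] by linarith
  qed
  show ?thesis
  proof (rule summable_comparison_test[where g = "\<lambda>n. a n * (e1+e2) powr p"])
    show "summable (\<lambda>n. a n * (e1 + e2) powr p)" using assms(3) by (rule summable_mult2)
    show "\<exists>N. \<forall>n\<ge>N. norm (a n * dist (x n) (y n) powr p) \<le> a n * (e1 + e2) powr p"
      using b assms(4,5) by (auto intro!: mult_left_mono powr_mono2)
  qed
qed

lemma dpa_less:
  fixes S r p :: real
  assumes "0 < r" "1 \<le> p" "0 \<le> S"
  shows "S powr (1/p) < r \<longleftrightarrow> S < r powr p"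
proof -
  have "S = (S powr (1/p)) powr p" using assms
    by (smt (verit, ccfv_SIG) divide_self_if ln_inj_iff ln_powr powr_eq_0_iff
    powr_nonneg_iff powr_one_gt_zero_iff times_divide_eq_left times_divide_eq_right)
  then show ?thesis using assms
    by (smt (verit, ccfv_threshold) powr_ge_zero powr_less_mono2)
qed

lemma pw_convex:
  fixes x y t p :: real
  assumes "0 \<le> x" "0 \<le> y" "0 \<le> t" "t \<le> 1" "1 \<le> p"
  shows "((1-t)*x + t*y) powr p \<le> (1-t)*x powr p + t* y powr p"
proof -
  have tp: "s powr p \<le> s" if "0 \<le> s" "s \<le> 1" for s :: real
    using that assms(5) by (metis less_eq_real_def powr_0 powr_le_one_le)
  consider "x = 0" | "y = 0" | "x > 0" "y > 0" using assms by linarith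
  then show ?thesis
  proof cases
    case 1
    then show ?thesis using assms tp[of t]
      by (simp add: powr_mult mult_right_mono)
  next
    case 2
    then show ?thesis using assms tp[of "1-t"]
      by (simp add: powr_mult mult_right_mono)
  next
    case 3
    then show ?thesis using convex_onD[OF powr_convex[OF assms(5)], of t x y] assms by simp
  qed
qed

lemma minkowski:
  fixes a u v :: "nat \<Rightarrow> real" and p :: real
  assumes p: "1 \<le> p" and a: "\<And>n. 0 \<le> a n" and u: "\<And>n. 0 \<le> u n" and v: "\<And>n. 0 \<le> v n"
    and su: "summable (\<lambda>n. a n * u n powr p)" and sv: "summable (\<lambda>n. a n * v n powr p)"
    and A: "A = (\<Sum>n. a n * u n powr p) powr (1/p)" and B: "B = (\<Sum>n. a n * v n powr p) powr (1/p)"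
    and A0: "0 < A" and B0: "0 < B"
  shows "summable (\<lambda>n. a n * (u n + v n) powr p) \<and>
         (\<Sum>n. a n * (u n + v n) powr p) powr (1/p) \<le> A + B"
proof -
  have SA: "(\<Sum>n. a n * u n powr p) = A powr p"
    using A p suminf_nonneg[OF su] a u by (simp add: powr_powr)
  have SB: "(\<Sum>n. a n * v n powr p) = B powr p"
    using B p suminf_nonneg[OF sv] a v by (simp add: powr_powr)
  define t where "t = B / (A + B)"
  have t0: "0 \<le> t" "t \<le> 1" using A0 B0 by (auto simp: t_def)
  have t1: "1 - t = A / (A + B)" using A0 B0 by (simp add: t_def field_simps)
  define g where "g n = (A+B) powr p * ((1-t) / A powr p * (a n * u n powr p) + t / B powr p * (a n * v n powr p))" for n
  have le: "a n * (u n + v n) powr p \<le> g n" for n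
  proof -
    have eq: "(u n + v n) / (A + B) = (1-t) * (u n / A) + t * (v n / B)"
    proof -
      have "(1-t) * (u n / A) = u n / (A+B)" using A0 B0 by (simp add: t1)
      moreover have "t * (v n / B) = v n / (A+B)" using A0 B0 by (simp add: t_def)
      ultimately show ?thesis by (simp add: add_divide_distrib)
    qed
    have "((u n + v n) / (A + B)) powr p \<le> (1-t) * (u n / A) powr p + t * (v n / B) powr p"
      unfolding eq using pw_convex[of "u n / A" "v n / B" t p] t0 p u v A0 B0 by simp
    then have "(u n + v n) powr p / (A+B) powr p \<le> (1-t) * (u n powr p / A powr p) + t * (v n powr p / B powr p)"
      using u v A0 B0 by (simp add: powr_divide)
    then have "(u n + v n) powr p \<le> (A+B) powr p * ((1-t) * (u n powr p / A powr p) + t * (v n powr p / B powr p))"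
      using A0 B0 by (simp add: divide_le_eq mult.commute)
    then have "a n * (u n + v n) powr p \<le> a n * ((A+B) powr p * ((1-t) * (u n powr p / A powr p) + t * (v n powr p / B powr p)))"
      using a by (rule mult_left_mono)
    then show ?thesis unfolding g_def by (simp add: algebra_simps)
  qed
  have gs: "g sums ((A+B) powr p * ((1-t) / A powr p * A powr p + t / B powr p * B powr p))"
  proof -
    have 1: "(\<lambda>n. a n * u n powr p) sums A powr p" using su SA by (metis summable_sums)
    have 2: "(\<lambda>n. a n * v n powr p) sums B powr p" using sv SB by (metis summable_sums)
    show ?thesis unfolding g_def by (intro sums_mult sums_add 1 2)
  qed
  have gval: "(A+B) powr p * ((1-t) / A powr p * A powr p + t / B powr p * B powr p) = (A+B) powr p"
    using A0 B0 by simp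
  have sg: "summable g" using gs by (rule sums_summable)
  have nle: "norm (a n * (u n + v n) powr p) \<le> g n" for n
  proof -
    have "0 \<le> a n * (u n + v n) powr p" using a[of n] by simp
    then have "norm (a n * (u n + v n) powr p) = a n * (u n + v n) powr p" by (simp only: real_norm_def abs_of_nonneg)
    then show ?thesis using le[of n] by linarith
  qed
  have sf: "summable (\<lambda>n. a n * (u n + v n) powr p)"
    by (rule summable_comparison_test[where g = g]) (use nle sg in blast)+
  have "(\<Sum>n. a n * (u n + v n) powr p) \<le> suminf g"
    by (rule suminf_le[OF le sf sg])
  also have "suminf g = (A+B) powr p" using sums_unique[OF gs] gval by simp
  finally have "(\<Sum>n. a n * (u n + v n) powr p) \<le> (A+B) powr p" .
  then have "(\<Sum>n. a n * (u n + v n) powr p) powr (1/p) \<le> ((A+B) powr p) powr (1/p)"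
    using suminf_nonneg[OF sf] a u v p by (intro powr_mono2) auto
  also have "\<dots> = A + B"
  proof -
    have "p * (1/p) = 1" using p by simp
    then show ?thesis using A0 B0 by (simp only: powr_powr powr_one_gt_zero_iff)
  qed
  finally show ?thesis using sf by blast
qed

lemma Sp_zero:
  assumes "x \<in> ell_infty" "y \<in> ell_infty" "summable a" "\<And>n. 0 < a n" "1 \<le> p"
  shows "(\<Sum>n. a n * dist (x n) (y n) powr p) = 0 \<longleftrightarrow> x = y"
proof -
  have a0: "0 \<le> a n" for n using assms(4)[of n] by linarith
  have s: "summable (\<lambda>n. a n * dist (x n) (y n) powr p)"
  proof -
    show ?thesis by (rule summable_Sp[OF assms(1,2,3) a0]) (use assms(5) in linarith)
  qed
  have "(\<Sum>n. a n * dist (x n) (y n) powr p) = 0 \<longleftrightarrow> (\<forall>n. a n * dist (x n) (y n) powr p = 0)"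
    using s by (rule suminf_eq_zero_iff) (simp add: a0)
  also have "\<dots> \<longleftrightarrow> (\<forall>n. x n = y n)"
  proof -
    have "a n * dist (x n) (y n) powr p = 0 \<longleftrightarrow> x n = y n" for n
    proof -
      have "a n \<noteq> 0" using assms(4)[of n] by linarith
      then show ?thesis by simp
    qed
    then show ?thesis by blast
  qed
  also have "\<dots> \<longleftrightarrow> x = y" by (rule fun_eq_iff[symmetric])
  finally show ?thesis .
qed

lemma metric_dpa:
  assumes p: "1 \<le> p" and a: "\<And>n. 0 < a n" and sa: "summable a"
  shows "Metric_space (ell_infty :: (nat \<Rightarrow> 'a::metric_space) set) (dpa p a)"
proof
  fix x y :: "nat \<Rightarrow> 'a"
  show "0 \<le> dpa p a x y" by (simp add: dpa_def)
  show "dpa p a x y = dpa p a y x" by (simp add: dpa_def dist_commute)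
  assume xy: "x \<in> ell_infty" "y \<in> ell_infty"
  show "dpa p a x y = 0 \<longleftrightarrow> x = y"
    unfolding dpa_def using Sp_zero[OF xy sa a p] by simp
next
  fix x y z :: "nat \<Rightarrow> 'a"
  assume xyz: "x \<in> ell_infty" "y \<in> ell_infty" "z \<in> ell_infty"
  have a0: "0 \<le> a n" for n using a[of n] by linarith
  have p0: "0 \<le> p" using p by simp
  show "dpa p a x z \<le> dpa p a x y + dpa p a y z"
  proof (cases "x = y \<or> y = z")
    case True
    then show ?thesis
    proof
      assume "x = y"
      then have "dpa p a x y = 0" unfolding dpa_def using Sp_zero[OF xyz(1,1) sa a p] by simp
      then show ?thesis using \<open>x = y\<close> by simp
    next
      assume "y = z"
      then have "dpa p a y z = 0" unfolding dpa_def using Sp_zero[OF xyz(2,2) sa a p] by simp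
      then show ?thesis using \<open>y = z\<close> by simp
    qed
  next
    case False
    have sxy: "summable (\<lambda>n. a n * dist (x n) (y n) powr p)" using summable_Sp[OF xyz(1,2) sa a0 p0] .
    have syz: "summable (\<lambda>n. a n * dist (y n) (z n) powr p)" using summable_Sp[OF xyz(2,3) sa a0 p0] .
    have sxz: "summable (\<lambda>n. a n * dist (x n) (z n) powr p)" using summable_Sp[OF xyz(1,3) sa a0 p0] .
    have A0: "0 < dpa p a x y"
    proof -
      have "(\<Sum>n. a n * dist (x n) (y n) powr p) \<noteq> 0" using Sp_zero[OF xyz(1,2) sa a p] False by simp
      then show ?thesis unfolding dpa_def using suminf_nonneg[OF sxy] a0
        by (simp add: order_less_le)
    qed
    have B0: "0 < dpa p a y z"
    proof -
      have "(\<Sum>n. a n * dist (y n) (z n) powr p) \<noteq> 0" using Sp_zero[OF xyz(2,3) sa a p] False by simp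
      then show ?thesis unfolding dpa_def using suminf_nonneg[OF syz] a0
        by (simp add: order_less_le)
    qed
    have M: "summable (\<lambda>n. a n * (dist (x n) (y n) + dist (y n) (z n)) powr p) \<and>
         (\<Sum>n. a n * (dist (x n) (y n) + dist (y n) (z n)) powr p) powr (1/p) \<le> dpa p a x y + dpa p a y z"
      by (rule minkowski[OF p a0 zero_le_dist zero_le_dist sxy syz _ _ A0 B0]) (simp_all add: dpa_def)
    have "(\<Sum>n. a n * dist (x n) (z n) powr p) \<le> (\<Sum>n. a n * (dist (x n) (y n) + dist (y n) (z n)) powr p)"
      using sxz M
    proof (intro suminf_le)
      fix n show "a n * dist (x n) (z n) powr p \<le> a n * (dist (x n) (y n) + dist (y n) (z n)) powr p"
        using a0 p0 dist_triangle[of "x n" "z n" "y n"] by (intro mult_left_mono powr_mono2) auto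
    qed auto
    then have "dpa p a x z \<le> (\<Sum>n. a n * (dist (x n) (y n) + dist (y n) (z n)) powr p) powr (1/p)"
      unfolding dpa_def using suminf_nonneg[OF sxz] a0 p by (intro powr_mono2) auto
    then show ?thesis using M by linarith
  qed
qed


lemma openin_dpa:
  assumes p: "1 \<le> p" and a: "\<And>n. 0 < a n" and sa: "summable a"
  shows "openin (dpa_topology p a) U \<longleftrightarrow> U \<subseteq> (ell_infty :: (nat \<Rightarrow> 'a::metric_space) set) \<and>
     (\<forall>x\<in>U. \<exists>r>0. {y\<in>ell_infty. dpa p a x y < r} \<subseteq> U)"
proof -
  have M: "Metric_space (ell_infty :: (nat \<Rightarrow> 'a) set) (dpa p a)" by (rule metric_dpa[OF p a sa])
  show ?thesis unfolding dpa_topology_def Metric_space.openin_mtopology[OF M] 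
    subset_eq Ball_def Metric_space.in_mball[OF M] by auto
qed

lemma term_le_Sp:
  assumes "x \<in> ell_infty" "y \<in> ell_infty" "summable a" "\<And>n. 0 \<le> a n" "0 \<le> p"
  shows "a k * dist (x k) (y k) powr p \<le> (\<Sum>n. a n * dist (x n) (y n) powr p)"
proof -
  have "sum (\<lambda>n. a n * dist (x n) (y n) powr p) {k} \<le> (\<Sum>n. a n * dist (x n) (y n) powr p)"
    by (rule sum_le_suminf[OF summable_Sp[OF assms]]) (simp_all add: assms(4))
  then show ?thesis by simp
qed

lemma partA:
  assumes p: "1 \<le> p" and a: "\<And>n. 0 < a n" and sa: "summable a"
    and U: "openin (tychonoff_ell :: (nat \<Rightarrow> 'a::metric_space) topology) U"
  shows "openin (dpa_topology p a) U"
proof -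
  have a0: "0 \<le> a n" for n using a[of n] by linarith
  have p0: "0 \<le> p" using p by linarith
  obtain V where V: "openin (product_topology (\<lambda>_. euclidean) UNIV) V" "U = V \<inter> ell_infty"
    using U unfolding tychonoff_ell_def openin_subtopology by auto
  show ?thesis unfolding openin_dpa[OF p a sa]
  proof (intro conjI ballI)
    show "U \<subseteq> ell_infty" using V by auto
    fix x assume xU: "x \<in> U"
    then have xV: "x \<in> V" and xl: "x \<in> ell_infty" using V by auto
    obtain W where W: "finite {i. W i \<noteq> UNIV}" "\<And>i. open (W i)" "x \<in> PiE UNIV W" "PiE UNIV W \<subseteq> V"
      using V(1) xV unfolding openin_product_topology_alt by force
    define F where "F = {i. W i \<noteq> UNIV}"
    have "\<forall>i\<in>F. \<exists>e>0. ball (x i) e \<subseteq> W i"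
    proof
      fix i assume "i \<in> F"
      have "x i \<in> W i" using W(3) by auto
      then show "\<exists>e>0. ball (x i) e \<subseteq> W i" using W(2)[of i] open_contains_ball by blast
    qed
    then obtain e where e: "\<forall>i\<in>F. e i > 0 \<and> ball (x i) (e i) \<subseteq> W i" by metis
    define \<delta> where "\<delta> = Min (insert 1 ((\<lambda>i. a i * e i powr p) ` F))"
    have finF: "finite F" using W(1) F_def by simp
    have \<delta>0: "0 < \<delta>" unfolding \<delta>_def using finF e a by (subst Min_gr_iff) auto
    have \<delta>le: "\<delta> \<le> a i * e i powr p" if "i \<in> F" for i
      unfolding \<delta>_def using finF that by (intro Min_le) auto
    define r where "r = \<delta> powr (1/p)"
    have r0: "0 < r" using \<delta>0 by (simp add: r_def)
    have rp: "r powr p = \<delta>" using \<delta>0 p by (simp add: r_def powr_powr)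
    show "\<exists>r>0. {y \<in> ell_infty. dpa p a x y < r} \<subseteq> U"
    proof (intro exI conjI subsetI)
      show "0 < r" by (rule r0)
      fix y assume "y \<in> {y \<in> ell_infty. dpa p a x y < r}"
      then have yl: "y \<in> ell_infty" and dy: "dpa p a x y < r" by auto
      have S0: "0 \<le> (\<Sum>n. a n * dist (x n) (y n) powr p)"
        using summable_Sp[OF xl yl sa a0 p0] by (rule suminf_nonneg) (simp add: a0)
      have Slt: "(\<Sum>n. a n * dist (x n) (y n) powr p) < \<delta>"
        using dy dpa_less[OF r0 p S0] rp unfolding dpa_def by simp
      have "\<forall>i. y i \<in> W i"
      proof
        fix i
        show "y i \<in> W i"
        proof (cases "i \<in> F")
          case False then show ?thesis by (simp add: F_def)
        next
          case True
          have "a i * dist (x i) (y i) powr p < a i * e i powr p"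
            using term_le_Sp[OF xl yl sa a0 p0, of i] Slt \<delta>le[OF True] by linarith
          then have "dist (x i) (y i) powr p < e i powr p" using a[of i] by simp
          then have "dist (x i) (y i) < e i" using p e True
            by (smt (verit, ccfv_SIG) powr_mono2 zero_le_dist)
          then have "y i \<in> ball (x i) (e i)" by (simp add: dist_commute)
          then show ?thesis using e True by blast
        qed
      qed
      then have "y \<in> PiE UNIV W" by (simp add: PiE_UNIV_domain Pi_iff)
      then show "y \<in> U" using W(4) V(2) yl by auto
    qed
  qed
qed


lemma partB:
  assumes bd: "bounded (UNIV :: 'a::metric_space set)"
    and p: "1 \<le> p" and a: "\<And>n. 0 < a n" and sa: "summable a"
    and U: "openin (dpa_topology p a) (U :: (nat \<Rightarrow> 'a) set)"
  shows "openin tychonoff_ell U"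
proof -
  have a0: "0 \<le> a n" for n using a[of n] by linarith
  have p0: "0 \<le> p" using p by linarith
  have Ul: "U \<subseteq> ell_infty" and Uo: "\<forall>x\<in>U. \<exists>r>0. {y\<in>ell_infty. dpa p a x y < r} \<subseteq> U"
    using U unfolding openin_dpa[OF p a sa] by auto
  show ?thesis
  proof (subst openin_subopen, intro ballI)
    fix x assume xU: "x \<in> U"
    then have xl: "x \<in> ell_infty" using Ul by auto
    obtain r where r0: "r > 0" and rU: "{y\<in>ell_infty. dpa p a x y < r} \<subseteq> U" using Uo xU by blast
    obtain e where e: "\<forall>y\<in>UNIV. dist (x 0) y \<le> e" using bd unfolding bounded_any_center[of _ "x 0"] by blast
    define D where "D = 2 * e"
    have D: "dist u v \<le> D" for u v :: 'a
      using e dist_triangle[of u v "x 0"] dist_commute[of u "x 0"] unfolding D_def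
      by (smt (verit) UNIV_I)
    have D0: "0 \<le> D" using D[of "x 0" "x 0"] by simp
    define \<epsilon> where "\<epsilon> = r powr p"
    have \<epsilon>0: "0 < \<epsilon>" using r0 by (simp add: \<epsilon>_def)
    define A where "A = suminf a"
    have A0: "0 \<le> A" unfolding A_def using sa a0 by (simp add: suminf_nonneg)
    define \<eta> where "\<eta> = \<epsilon> / (2 * (D powr p + 1))"
    have Dp: "0 < 2 * (D powr p + 1)" by (smt (verit) powr_ge_zero)
    have \<eta>0: "0 < \<eta>" unfolding \<eta>_def using \<epsilon>0 Dp by (rule divide_pos_pos)
    have "(\<lambda>n. sum a {..<n}) \<longlonglongrightarrow> A" unfolding A_def using sa by (rule summable_LIMSEQ)
    then obtain N where N: "\<bar>sum a {..<N} - A\<bar> < \<eta>"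
      using \<eta>0 LIMSEQ_D[of "\<lambda>n. sum a {..<n}" A] by (metis order.refl real_norm_def)
    have tail: "(\<Sum>n. a (n + N)) < \<eta>"
      using N suminf_minus_initial_segment[OF sa, of N] unfolding A_def by linarith
    define \<delta> where "\<delta> = (\<epsilon> / (4 * (A + 1))) powr (1/p)"
    have \<delta>0: "0 < \<delta>" using \<epsilon>0 A0 by (simp add: \<delta>_def)
    have \<delta>p: "\<delta> powr p = \<epsilon> / (4 * (A + 1))" unfolding \<delta>_def using \<epsilon>0 A0 p by (simp add: powr_powr)
    define T where "T = PiE UNIV (\<lambda>n. if n < N then ball (x n) \<delta> else UNIV) \<inter> ell_infty"
    show "\<exists>T. openin tychonoff_ell T \<and> x \<in> T \<and> T \<subseteq> U"
    proof (intro exI conjI)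
      have "openin (product_topology (\<lambda>_. euclidean) UNIV) (PiE UNIV (\<lambda>n. if n < N then ball (x n) \<delta> else UNIV))"
      proof (subst openin_PiE_gen, rule disjI2, intro conjI ballI)
        show "finite {i \<in> UNIV. (if i < N then ball (x i) \<delta> else UNIV) \<noteq> topspace euclidean}"
          by (rule finite_subset[of _ "{..<N}"]) auto
        fix i show "openin euclidean (if i < N then ball (x i) \<delta> else UNIV)" by simp
      qed
      then show "openin tychonoff_ell T" unfolding tychonoff_ell_def T_def openin_subtopology by blast
      show "x \<in> T" unfolding T_def using xl \<delta>0 by (simp add: PiE_UNIV_domain Pi_iff)
      show "T \<subseteq> U"
      proof
        fix y assume yT: "y \<in> T"
        then have yl: "y \<in> ell_infty" and yc: "\<And>n. n < N \<Longrightarrow> dist (x n) (y n) < \<delta>"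
          unfolding T_def by (auto simp: PiE_UNIV_domain Pi_iff split: if_splits)
        define f where "f n = a n * dist (x n) (y n) powr p" for n
        have sf: "summable f" unfolding f_def by (rule summable_Sp[OF xl yl sa a0 p0])
        have f0: "0 \<le> f n" for n unfolding f_def using a0 by simp
        have split: "suminf f = (\<Sum>n. f (n + N)) + sum f {..<N}"
          by (rule suminf_split_initial_segment[OF sf])
        have h1: "sum f {..<N} \<le> \<delta> powr p * A"
        proof -
          have "sum f {..<N} \<le> sum (\<lambda>n. a n * \<delta> powr p) {..<N}"
            unfolding f_def using yc a0 p0 by (intro sum_mono mult_left_mono powr_mono2) (auto intro: less_imp_le)
          also have "\<dots> = \<delta> powr p * sum a {..<N}" by (simp add: sum_distrib_left mult.commute)
          also have "sum a {..<N} \<le> A" unfolding A_def using sa a0 by (intro sum_le_suminf) auto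
          then have "\<delta> powr p * sum a {..<N} \<le> \<delta> powr p * A" by (intro mult_left_mono) auto
          finally show ?thesis .
        qed
        have h2: "(\<Sum>n. f (n + N)) \<le> D powr p * \<eta>"
        proof -
          have st: "summable (\<lambda>n. a (n + N))" using sa by (rule summable_ignore_initial_segment)
          have "(\<Sum>n. f (n + N)) \<le> (\<Sum>n. D powr p * a (n + N))"
          proof (rule suminf_le)
            fix n show "f (n + N) \<le> D powr p * a (n + N)"
            proof -
              have "dist (x (n + N)) (y (n + N)) powr p \<le> D powr p"
                using D p0 by (intro powr_mono2) auto
              then have "a (n + N) * dist (x (n + N)) (y (n + N)) powr p \<le> a (n + N) * D powr p"
                using a0 by (rule mult_left_mono)
              then show ?thesis unfolding f_def by (simp add: mult.commute)
            qed
            show "summable (\<lambda>n. f (n + N))" using sf by (rule summable_ignore_initial_segment)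
            show "summable (\<lambda>n. D powr p * a (n + N))" using st by (rule summable_mult)
          qed
          also have "\<dots> = D powr p * (\<Sum>n. a (n + N))" using st by (rule suminf_mult)
          also have "\<dots> \<le> D powr p * \<eta>" using tail by (intro mult_left_mono) auto
          finally show ?thesis .
        qed
        have "\<delta> powr p * A < \<epsilon> / 2"
        proof -
          have "\<delta> powr p * A = \<epsilon> * A / (4 * (A + 1))" using \<delta>p by simp
          also have "\<dots> < \<epsilon> / 2" using \<epsilon>0 A0 by (simp add: field_simps) (smt (verit) mult_nonneg_nonneg)
          finally show ?thesis .
        qed
        moreover have "D powr p * \<eta> < \<epsilon> / 2"
        proof -
          have "D powr p * \<eta> = \<epsilon> * D powr p / (2 * (D powr p + 1))" unfolding \<eta>_def by simp
          also have "\<dots> < \<epsilon> / 2" using \<epsilon>0 by (simp add: field_simps add_pos_nonneg)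
          finally show ?thesis .
        qed
        ultimately have "suminf f < \<epsilon>" using split h1 h2 by linarith
        then have "dpa p a x y < r"
          unfolding dpa_def \<epsilon>_def f_def[symmetric] using dpa_less[OF r0 p suminf_nonneg[OF sf f0]] by simp
        then show "y \<in> U" using rU yl by blast
      qed
    qed
  qed
qed


lemma summable_lin:
  assumes "w \<in> ell_infty" "summable a" "\<And>n. 0 \<le> a n"
  shows "summable (\<lambda>n. a n * dist c (w n))"
proof -
  obtain e where e: "\<forall>z\<in>range w. dist c z \<le> e" using assms(1) unfolding ell_infty_def bounded_any_center[of _ c] by auto
  show ?thesis
  proof (rule summable_comparison_test[where g = "\<lambda>n. a n * e"])
    show "summable (\<lambda>n. a n * e)" using assms(2) by (rule summable_mult2)
    show "\<exists>N. \<forall>n\<ge>N. norm (a n * dist c (w n)) \<le> a n * e"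
    proof (intro exI allI impI)
      fix n
      have "dist c (w n) \<le> e" using e by auto
      then show "norm (a n * dist c (w n)) \<le> a n * e" using assms(3)[of n] by (simp add: mult_left_mono)
    qed
  qed
qed

lemma partC:
  assumes nb: "\<not> bounded (UNIV :: 'a::metric_space set)"
    and p: "1 \<le> p" and a: "\<And>n. 0 < a n" and sa: "summable a"
  shows "(tychonoff_ell :: (nat \<Rightarrow> 'a) topology) \<noteq> dpa_topology p a"
proof
  assume eqT: "(tychonoff_ell :: (nat \<Rightarrow> 'a) topology) = dpa_topology p a"
  have a0: "0 \<le> a n" for n using a[of n] by linarith
  have p0: "0 \<le> p" using p by linarith
  obtain c :: 'a where True by blast
  define g where "g w = (\<Sum>n. a n * dist c (w n))" for w :: "nat \<Rightarrow> 'a"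
  define U where "U = {w \<in> ell_infty. g w < 1}"
  define A where "A = suminf a"
  have A0: "0 \<le> A" unfolding A_def using sa a0 by (simp add: suminf_nonneg)
  have Uo: "openin (dpa_topology p a) U"
    unfolding openin_dpa[OF p a sa]
  proof (intro conjI ballI)
    show "U \<subseteq> ell_infty" unfolding U_def by auto
    fix w assume wU: "w \<in> U"
    then have wl: "w \<in> ell_infty" and gw: "g w < 1" unfolding U_def by auto
    define \<eta> where "\<eta> = 1 - g w"
    have \<eta>0: "0 < \<eta>" using gw by (simp add: \<eta>_def)
    define \<delta> where "\<delta> = \<eta> / (2 * (A + 1))"
    have \<delta>0: "0 < \<delta>" unfolding \<delta>_def using \<eta>0 A0 by simp
    define \<epsilon> where "\<epsilon> = \<eta> / 2 * \<delta> powr (p - 1)"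
    have \<epsilon>0: "0 < \<epsilon>" unfolding \<epsilon>_def using \<eta>0 \<delta>0 by simp
    define r where "r = \<epsilon> powr (1/p)"
    have r0: "0 < r" unfolding r_def using \<epsilon>0 by simp
    have rp: "r powr p = \<epsilon>" unfolding r_def using \<epsilon>0 p by (simp add: powr_powr)
    show "\<exists>r>0. {y \<in> ell_infty. dpa p a w y < r} \<subseteq> U"
    proof (intro exI conjI subsetI)
      show "0 < r" by (rule r0)
      fix v assume "v \<in> {y \<in> ell_infty. dpa p a w y < r}"
      then have vl: "v \<in> ell_infty" and dv: "dpa p a w v < r" by auto
      define t where "t n = dist (w n) (v n)" for n
      have sS: "summable (\<lambda>n. a n * t n powr p)" unfolding t_def by (rule summable_Sp[OF wl vl sa a0 p0])
      have S0: "0 \<le> (\<Sum>n. a n * t n powr p)" using sS by (rule suminf_nonneg) (simp add: a0)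
      have Slt: "(\<Sum>n. a n * t n powr p) < \<epsilon>"
        using dv dpa_less[OF r0 p S0] rp unfolding dpa_def t_def by simp
      have st: "summable (\<lambda>n. a n * t n)"
      proof -
        have "summable (\<lambda>n. a n * dist (w n) (v n) powr 1)" by (rule summable_Sp[OF wl vl sa a0]) simp
        then show ?thesis unfolding t_def by simp
      qed
      have trm: "a n * t n \<le> a n * \<delta> + a n * t n powr p / \<delta> powr (p - 1)" for n
      proof -
        have t0: "0 \<le> t n" unfolding t_def by simp
        have "t n \<le> \<delta> + t n powr p / \<delta> powr (p - 1)"
        proof (cases "t n \<le> \<delta>")
          case True
          then show ?thesis using \<delta>0 by (smt (verit) divide_nonneg_pos powr_ge_zero powr_gt_zero)
        next
          case False
          then have tpos: "0 < t n" using \<delta>0 by linarith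
          have "1 \<le> (t n / \<delta>) powr (p - 1)"
            using False \<delta>0 p by (intro ge_one_powr_ge_zero) auto
          then have "t n \<le> t n * (t n / \<delta>) powr (p - 1)" using tpos by simp
          also have "\<dots> = t n powr p / \<delta> powr (p - 1)"
            using tpos \<delta>0 by (simp add: powr_divide powr_diff field_simps)
          finally show ?thesis using \<delta>0 by (smt (verit) powr_ge_zero)
        qed
        then have "a n * t n \<le> a n * (\<delta> + t n powr p / \<delta> powr (p - 1))" using a0 by (rule mult_left_mono)
        then show ?thesis by (simp add: algebra_simps)
      qed
      have s1: "summable (\<lambda>n. a n * \<delta>)" using sa by (rule summable_mult2)
      have s2: "summable (\<lambda>n. a n * t n powr p / \<delta> powr (p - 1))" using sS by (rule summable_divide)
      have "(\<Sum>n. a n * t n) \<le> (\<Sum>n. a n * \<delta> + a n * t n powr p / \<delta> powr (p - 1))"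
        by (rule suminf_le[OF trm st summable_add[OF s1 s2]])
      also have "\<dots> = (\<Sum>n. a n * \<delta>) + (\<Sum>n. a n * t n powr p / \<delta> powr (p - 1))"
        by (rule suminf_add[OF s1 s2, symmetric])
      also have "(\<Sum>n. a n * \<delta>) = A * \<delta>" unfolding A_def using sa by (rule suminf_mult2[symmetric])
      also have "(\<Sum>n. a n * t n powr p / \<delta> powr (p - 1)) = (\<Sum>n. a n * t n powr p) / \<delta> powr (p - 1)"
        using sS by (rule suminf_divide)
      finally have h: "(\<Sum>n. a n * t n) \<le> A * \<delta> + (\<Sum>n. a n * t n powr p) / \<delta> powr (p - 1)" .
      have h1: "A * \<delta> < \<eta> / 2"
      proof -
        have "A * \<delta> = \<eta> * A / (2 * (A + 1))" unfolding \<delta>_def by simp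
        also have "\<dots> < \<eta> / 2" using \<eta>0 A0 by (simp add: field_simps)
        finally show ?thesis .
      qed
      have h2: "(\<Sum>n. a n * t n powr p) / \<delta> powr (p - 1) < \<eta> / 2"
      proof -
        have "(\<Sum>n. a n * t n powr p) / \<delta> powr (p - 1) < \<epsilon> / \<delta> powr (p - 1)"
          using Slt \<delta>0 by (simp add: divide_strict_right_mono)
        also have "\<epsilon> / \<delta> powr (p - 1) = \<eta> / 2" unfolding \<epsilon>_def using \<delta>0 by simp
        finally show ?thesis .
      qed
      have sg: "summable (\<lambda>n. a n * dist c (w n))" by (rule summable_lin[OF wl sa a0])
      have sgv: "summable (\<lambda>n. a n * dist c (v n))" by (rule summable_lin[OF vl sa a0])
      have "g v \<le> (\<Sum>n. a n * dist c (w n) + a n * t n)"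
        unfolding g_def
      proof (rule suminf_le)
        fix n show "a n * dist c (v n) \<le> a n * dist c (w n) + a n * t n"
          using dist_triangle[of c "v n" "w n"] a0[of n] unfolding t_def
          by (simp add: mult_left_mono flip: distrib_left)
      qed (use sgv sg st in \<open>auto intro: summable_add\<close>)
      also have "\<dots> = g w + (\<Sum>n. a n * t n)" unfolding g_def by (rule suminf_add[OF sg st, symmetric])
      finally have "g v < 1" using h h1 h2 \<eta>_def by linarith
      then show "v \<in> U" unfolding U_def using vl by simp
    qed
  qed
  have "\<forall>k. \<exists>z. 1 / a k < dist c z" using nb unfolding bounded_any_center[of _ c] by (meson UNIV_I not_le)
  then obtain z where z: "\<And>k. 1 / a k < dist c (z k)" by metis
  define y where "y k = (\<lambda>n. if n = k then z k else c)" for k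
  have yl: "y k \<in> ell_infty" for k
  proof -
    have "range (y k) \<subseteq> {z k, c}" unfolding y_def by auto
    moreover have "bounded {z k, c}" by (rule finite_imp_bounded) simp
    ultimately show ?thesis unfolding ell_infty_def using bounded_subset by blast
  qed
  have gy: "g (y k) = a k * dist c (z k)" for k
  proof -
    have "g (y k) = sum (\<lambda>n. a n * dist c (y k n)) {k}"
      unfolding g_def by (rule suminf_finite) (auto simp: y_def)
    then show ?thesis by (simp add: y_def)
  qed
  have yU: "y k \<notin> U" for k
  proof -
    have "1 = a k * (1 / a k)" using a[of k] by simp
    also have "\<dots> < a k * dist c (z k)" using z[of k] a[of k] by (rule mult_strict_left_mono)
    finally show ?thesis using gy[of k] unfolding U_def by simp
  qed
  define x0 where "x0 = (\<lambda>n::nat. c)"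
  have x0l: "x0 \<in> ell_infty" unfolding ell_infty_def x0_def by simp
  have x0U: "x0 \<in> U" unfolding U_def g_def x0_def using x0l[unfolded x0_def] by simp
  have lim: "limitin tychonoff_ell y x0 sequentially"
    unfolding tychonoff_ell_def limitin_subtopology
  proof (intro conjI)
    show "x0 \<in> ell_infty" by (rule x0l)
    show "\<forall>\<^sub>F k in sequentially. y k \<in> ell_infty" using yl by simp
    show "limitin (product_topology (\<lambda>_. euclidean) UNIV) y x0 sequentially"
      unfolding limitin_componentwise
    proof (intro conjI ballI)
      show "x0 \<in> extensional UNIV" by simp
      show "\<forall>\<^sub>F k in sequentially. y k \<in> topspace (product_topology (\<lambda>_. euclidean) UNIV)" by simp
      fix i :: nat
      have "\<forall>\<^sub>F k in sequentially. y k i = x0 i"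
        unfolding eventually_sequentially y_def x0_def by (intro exI[of _ "Suc i"]) auto
      then show "limitin euclidean (\<lambda>k. y k i) (x0 i) sequentially"
        unfolding limitin_canonical_iff by (rule tendsto_eventually)
    qed
  qed
  have "openin tychonoff_ell U" using Uo eqT by simp
  then have "\<forall>\<^sub>F k in sequentially. y k \<in> U" using lim x0U unfolding limitin_def by blast
  then show False using yU by simp
qed


theorem mainTheorem4:
  fixes p :: real and a :: "nat \<Rightarrow> real"
  assumes not_singleton: "\<exists>x y :: 'a::metric_space. x \<noteq> y"
    and p: "1 \<le> p"
    and a_pos: "\<And>n. 0 < a n"
    and a_summable: "summable a"
  shows "(tychonoff_ell :: (nat \<Rightarrow> 'a) topology) = dpa_topology p a
         \<longleftrightarrow> bounded (UNIV :: 'a set)"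
proof
  assume "(tychonoff_ell :: (nat \<Rightarrow> 'a) topology) = dpa_topology p a"
  then show "bounded (UNIV :: 'a set)" using partC[OF _ p a_pos a_summable] by blast
next
  assume bd: "bounded (UNIV :: 'a set)"
  show "(tychonoff_ell :: (nat \<Rightarrow> 'a) topology) = dpa_topology p a"
    unfolding topology_eq
    using partA[OF p a_pos a_summable] partB[OF bd p a_pos a_summable] by blast
qed

end
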